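(* Let $(\rho,\mathbf{u},\Sigma)$ be a smooth solution on $\Omega\subset\mathbb{R}^d$, with $\rho>0$ and $\alpha>0$, of the pressureless IGR system $$\partial_t\rho+\nabla\cdot(\rho\mathbf{u})=0,\quad \partial_t(\rho\mathbf{u})+\nabla\cdot(\rho\mathbf{u}\otimes\mathbf{u}+\Sigma\,\mathbb{I})=0,$$ $$\rho^{-1}\Sigma-\alpha\nabla\cdot(\rho^{-1}\nabla\Sigma)=\alpha\big(\mathrm{tr}^2(\nabla\mathbf{u})+\mathrm{tr}((\nabla\mathbf{u})^2)\big).$$ Then $K_E=\frac12\rho\big(|\mathbf{u}|^2+\alpha(\nabla\cdot\mathbf{u})^2\big)$ satisfies $$\partial_t K_E+\nabla\cdot\big((K_E+\Sigma)\mathbf{u}\big)=\alpha\,\rho\,(\nabla\cdot\mathbf{u})^3.$$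
   Context: $\nabla\mathbf{u}$ is the velocity gradient matrix, $\mathrm{tr}^2(\cdot)=(\mathrm{tr}(\cdot))^2$, $\mathbb{I}$ the identity matrix, and $(\nabla\cdot(\mathbf{a}\otimes\mathbf{b}))_i=\sum_j\partial_j(a_ib_j)$. *)

theory Defs
  imports "HOL-Analysis.Analysis"
begin

definition pdir :: "'a::real_normed_vector \<Rightarrow> ('a \<Rightarrow> real) \<Rightarrow> 'a \<Rightarrow> real" where
  "pdir v g z = deriv (\<lambda>s. g (z + s *\<^sub>R v)) 0"

definition smooth_on :: "'a::euclidean_space set \<Rightarrow> ('a \<Rightarrow> real) \<Rightarrow> bool" where
  "smooth_on S g \<longleftrightarrow>
     (\<forall>vs. set vs \<subseteq> Basis \<longrightarrow>
        continuous_on S (foldr pdir vs g) \<and>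
        (\<forall>z\<in>S. \<forall>v\<in>Basis. (\<lambda>s. foldr pdir vs g (z + s *\<^sub>R v)) differentiable (at 0)))"

definition dt :: "(real \<times> (real^'n) \<Rightarrow> real) \<Rightarrow> real \<times> (real^'n) \<Rightarrow> real" where
  "dt f z = pdir (1, 0) f z"

definition dx :: "'n::finite \<Rightarrow> (real \<times> (real^'n) \<Rightarrow> real) \<Rightarrow> real \<times> (real^'n) \<Rightarrow> real" where
  "dx j f z = pdir (0, axis j 1) f z"

definition divg :: "(real \<times> (real^'n) \<Rightarrow> real^'n) \<Rightarrow> real \<times> (real^'n) \<Rightarrow> real" where
  "divg u z = (\<Sum>j\<in>UNIV. dx j (\<lambda>w. u w $ j) z)"

end

theory Submission
  imports Defs
begin


definition ld :: "'a::real_normed_vector \<Rightarrow> ('a \<Rightarrow> real) \<Rightarrow> 'a \<Rightarrow> bool" where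
  "ld v g z \<longleftrightarrow> (\<lambda>s. g (z + s *\<^sub>R v)) differentiable (at 0)"

lemma pdir_has: "ld v g z \<Longrightarrow> ((\<lambda>s. g (z + s *\<^sub>R v)) has_real_derivative pdir v g z) (at 0)"
  unfolding ld_def pdir_def using DERIV_deriv_iff_real_differentiable by blast

lemma ld_I: "((\<lambda>s. g (z + s *\<^sub>R v)) has_real_derivative D) (at 0) \<Longrightarrow> ld v g z"
  unfolding ld_def using real_differentiable_def by blast

lemma pdir_I: "((\<lambda>s. g (z + s *\<^sub>R v)) has_real_derivative D) (at 0) \<Longrightarrow> pdir v g z = D"
  unfolding pdir_def by (rule DERIV_imp_deriv)

lemma pdir_I': "((\<lambda>s. g (z + s *\<^sub>R v)) has_real_derivative D) (at 0) \<Longrightarrow> D = E \<Longrightarrow> pdir v g z = E"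
  using pdir_I by blast

lemma ld_const[simp]: "ld v (\<lambda>w. c) z"
  by (rule ld_I[of _ _ _ 0]) simp
lemma pdir_const[simp]: "pdir v (\<lambda>w. c) z = 0"
  by (rule pdir_I) simp

lemma ld_add[simp]: "ld v f z \<Longrightarrow> ld v g z \<Longrightarrow> ld v (\<lambda>w. f w + g w) z"
  by (rule ld_I, rule DERIV_add[OF pdir_has pdir_has])
lemma pdir_add[simp]: "ld v f z \<Longrightarrow> ld v g z \<Longrightarrow> pdir v (\<lambda>w. f w + g w) z = pdir v f z + pdir v g z"
  by (rule pdir_I, rule DERIV_add[OF pdir_has pdir_has])
lemma ld_diff[simp]: "ld v f z \<Longrightarrow> ld v g z \<Longrightarrow> ld v (\<lambda>w. f w - g w) z"
  by (rule ld_I, rule DERIV_diff[OF pdir_has pdir_has])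
lemma pdir_diff[simp]: "ld v f z \<Longrightarrow> ld v g z \<Longrightarrow> pdir v (\<lambda>w. f w - g w) z = pdir v f z - pdir v g z"
  by (rule pdir_I, rule DERIV_diff[OF pdir_has pdir_has])
lemma ld_mult[simp]: "ld v f z \<Longrightarrow> ld v g z \<Longrightarrow> ld v (\<lambda>w. f w * g w) z"
  by (rule ld_I, rule DERIV_mult[OF pdir_has pdir_has])
lemma pdir_mult[simp]: assumes "ld v f z" "ld v g z"
  shows "pdir v (\<lambda>w. f w * g w) z = pdir v f z * g z + f z * pdir v g z"
  by (rule pdir_I'[OF DERIV_mult[OF pdir_has[OF assms(1)] pdir_has[OF assms(2)]]]) (simp add: algebra_simps)
lemma ld_divide[simp]: assumes "ld v f z" "ld v g z" "g z \<noteq> 0" shows "ld v (\<lambda>w. f w / g w) z"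
  by (rule ld_I, rule DERIV_divide[OF pdir_has[OF assms(1)] pdir_has[OF assms(2)]]) (simp add: assms)
lemma pdir_divide[simp]: assumes "ld v f z" "ld v g z" "g z \<noteq> 0" shows
   "pdir v (\<lambda>w. f w / g w) z = (pdir v f z * g z - f z * pdir v g z) / (g z * g z)"
  by (rule pdir_I'[OF DERIV_divide[OF pdir_has[OF assms(1)] pdir_has[OF assms(2)]]]) (simp_all add: assms algebra_simps power2_eq_square)

lemma ld_sum[simp]: "(\<And>i. i \<in> A \<Longrightarrow> ld v (f i) z) \<Longrightarrow> ld v (\<lambda>w. \<Sum>i\<in>A. f i w) z"
  by (rule ld_I, rule DERIV_sum[OF pdir_has])
lemma pdir_sum[simp]: "(\<And>i. i \<in> A \<Longrightarrow> ld v (f i) z) \<Longrightarrow> pdir v (\<lambda>w. \<Sum>i\<in>A. f i w) z = (\<Sum>i\<in>A. pdir v (f i) z)"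
  by (rule pdir_I, rule DERIV_sum[OF pdir_has])

lemma pdir_cong:
  assumes "open S" "z \<in> S" "\<And>w. w \<in> S \<Longrightarrow> f w = g w"
  shows "pdir v f z = pdir v g z"
proof -
  have "open ((\<lambda>s::real. z + s *\<^sub>R v) -` S)"
    by (intro open_vimage assms continuous_intros)
  then have "\<forall>\<^sub>F s in nhds 0. z + s *\<^sub>R v \<in> S"
    using eventually_nhds_in_open[of "(\<lambda>s::real. z + s *\<^sub>R v) -` S" 0] assms(2) by simp
  then have "\<forall>\<^sub>F s in nhds 0. f (z + s *\<^sub>R v) = g (z + s *\<^sub>R v)"
    by eventually_elim (simp add: assms(3))
  then show ?thesis unfolding pdir_def by (rule deriv_cong_ev) simp
qed

lemma ld_shift:
  assumes "ld v g (q + x *\<^sub>R v)"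
  shows "((\<lambda>s. g (q + s *\<^sub>R v)) has_real_derivative pdir v g (q + x *\<^sub>R v)) (at x)"
proof -
  have "((\<lambda>s. g ((q + x *\<^sub>R v) + s *\<^sub>R v)) has_real_derivative pdir v g (q + x *\<^sub>R v)) (at 0)"
    using pdir_has[OF assms] .
  moreover have "(\<lambda>s. g ((q + x *\<^sub>R v) + s *\<^sub>R v)) = (\<lambda>s. (\<lambda>s. g (q + s *\<^sub>R v)) (s + x))"
    by (simp add: algebra_simps)
  ultimately show ?thesis using DERIV_shift[of "\<lambda>s. g (q + s *\<^sub>R v)" _ 0 x] by simp
qed


lemma ld_shift':
  assumes "ld v g p" "p = q + x *\<^sub>R v" "\<And>s. g (q + s *\<^sub>R v) = F s"
  shows "(F has_real_derivative pdir v g p) (at x)"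
proof -
  have "(\<lambda>s. g (q + s *\<^sub>R v)) = F" using assms(3) by auto
  then show ?thesis using ld_shift[of v g q x] assms(1,2) by simp
qed

lemma mixed_mvt:
  fixes f :: "'a::real_normed_vector \<Rightarrow> real"
  assumes h: "h > 0"
    and d: "\<And>x y. 0 \<le> x \<Longrightarrow> x \<le> h \<Longrightarrow> 0 \<le> y \<Longrightarrow> y \<le> h \<Longrightarrow>
        ld a f (z + x *\<^sub>R a + y *\<^sub>R b) \<and> ld b (pdir a f) (z + x *\<^sub>R a + y *\<^sub>R b)"
  shows "\<exists>\<xi> \<eta>. 0 < \<xi> \<and> \<xi> < h \<and> 0 < \<eta> \<and> \<eta> < h \<and>
     f (z + h *\<^sub>R a + h *\<^sub>R b) - f (z + h *\<^sub>R a) - f (z + h *\<^sub>R b) + f z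
       = h * h * pdir b (pdir a f) (z + \<xi> *\<^sub>R a + \<eta> *\<^sub>R b)"
proof -
  define \<phi> where "\<phi> x = f (z + x *\<^sub>R a + h *\<^sub>R b) - f (z + x *\<^sub>R a)" for x
  have "DERIV \<phi> x :> pdir a f (z + x *\<^sub>R a + h *\<^sub>R b) - pdir a f (z + x *\<^sub>R a)"
    if "0 \<le> x" "x \<le> h" for x
  proof -
    have 1: "((\<lambda>x. f (z + x *\<^sub>R a + h *\<^sub>R b)) has_real_derivative pdir a f (z + x *\<^sub>R a + h *\<^sub>R b)) (at x)"
      by (rule ld_shift'[where q="z + h *\<^sub>R b"]) (use d[of x h] that h in \<open>auto simp: algebra_simps\<close>)
    have 2: "((\<lambda>x. f (z + x *\<^sub>R a)) has_real_derivative pdir a f (z + x *\<^sub>R a)) (at x)"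
      by (rule ld_shift'[where q="z"]) (use d[of x 0] that h in \<open>auto simp: algebra_simps\<close>)
    show ?thesis unfolding \<phi>_def by (rule DERIV_diff[OF 1 2])
  qed
  from MVT2[OF h this] obtain \<xi> where \<xi>: "0 < \<xi>" "\<xi> < h"
    "\<phi> h - \<phi> 0 = (h - 0) * (pdir a f (z + \<xi> *\<^sub>R a + h *\<^sub>R b) - pdir a f (z + \<xi> *\<^sub>R a))"
    by auto
  define \<psi> where "\<psi> y = pdir a f (z + \<xi> *\<^sub>R a + y *\<^sub>R b)" for y
  have "DERIV \<psi> y :> pdir b (pdir a f) (z + \<xi> *\<^sub>R a + y *\<^sub>R b)" if "0 \<le> y" "y \<le> h" for y
    unfolding \<psi>_def
    by (rule ld_shift'[where q="z + \<xi> *\<^sub>R a"]) (use d[of \<xi> y] that \<xi> in \<open>auto simp: algebra_simps\<close>)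
  from MVT2[OF h this] obtain \<eta> where \<eta>: "0 < \<eta>" "\<eta> < h"
    "\<psi> h - \<psi> 0 = (h - 0) * pdir b (pdir a f) (z + \<xi> *\<^sub>R a + \<eta> *\<^sub>R b)"
    by auto
  have "f (z + h *\<^sub>R a + h *\<^sub>R b) - f (z + h *\<^sub>R a) - f (z + h *\<^sub>R b) + f z = \<phi> h - \<phi> 0"
    unfolding \<phi>_def by simp
  also have "\<dots> = h * (\<psi> h - \<psi> 0)" using \<xi>(3) unfolding \<psi>_def by simp
  also have "\<dots> = h * h * pdir b (pdir a f) (z + \<xi> *\<^sub>R a + \<eta> *\<^sub>R b)" using \<eta>(3) by simp
  finally show ?thesis using \<xi> \<eta> by blast
qed

lemma near_pt:
  fixes a b :: "'a::real_normed_vector"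
  assumes "norm a \<le> 1" "norm b \<le> 1" "0 \<le> x" "x \<le> h" "0 \<le> y" "y \<le> h"
  shows "dist (z + x *\<^sub>R a + y *\<^sub>R b) z \<le> 2 * h"
proof -
  have "dist (z + x *\<^sub>R a + y *\<^sub>R b) z = norm (x *\<^sub>R a + y *\<^sub>R b)" by (simp add: dist_norm)
  also have "\<dots> \<le> norm (x *\<^sub>R a) + norm (y *\<^sub>R b)" by (rule norm_triangle_ineq)
  also have "\<dots> = x * norm a + y * norm b" using assms by simp
  also have "\<dots> \<le> x + y" using assms by (intro add_mono mult_left_le) auto
  finally show ?thesis using assms by simp
qed

lemma clairaut:
  fixes f :: "'a::real_normed_vector \<Rightarrow> real"
  assumes S: "open S" "z \<in> S" and nab: "norm a \<le> 1" "norm b \<le> 1"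
    and d: "\<And>w. w \<in> S \<Longrightarrow> ld a f w \<and> ld b f w \<and> ld b (pdir a f) w \<and> ld a (pdir b f) w"
    and cP: "continuous_on S (pdir b (pdir a f))" and cQ: "continuous_on S (pdir a (pdir b f))"
  shows "pdir b (pdir a f) z = pdir a (pdir b f) z"
proof (rule ccontr)
  define P where "P = pdir b (pdir a f)"
  define Q where "Q = pdir a (pdir b f)"
  assume "pdir b (pdir a f) z \<noteq> pdir a (pdir b f) z"
  then have ne: "P z \<noteq> Q z" unfolding P_def Q_def .
  define e where "e = \<bar>P z - Q z\<bar> / 2"
  have e: "e > 0" using ne unfolding e_def by simp
  obtain r where r: "r > 0" "ball z r \<subseteq> S" using S open_contains_ball by blast
  obtain d1 where d1: "d1 > 0" "\<And>w. w \<in> S \<Longrightarrow> dist w z < d1 \<Longrightarrow> dist (P w) (P z) < e"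
    using cP S(2) e unfolding continuous_on_iff P_def by metis
  obtain d2 where d2: "d2 > 0" "\<And>w. w \<in> S \<Longrightarrow> dist w z < d2 \<Longrightarrow> dist (Q w) (Q z) < e"
    using cQ S(2) e unfolding continuous_on_iff Q_def by metis
  define h where "h = min r (min d1 d2) / 3"
  have h: "h > 0" "2 * h < r" "2 * h < d1" "2 * h < d2" using r d1 d2 unfolding h_def by auto
  have inS: "z + x *\<^sub>R a' + y *\<^sub>R b' \<in> S" "dist (z + x *\<^sub>R a' + y *\<^sub>R b') z < d1"
      "dist (z + x *\<^sub>R a' + y *\<^sub>R b') z < d2"
    if "0 \<le> x" "x \<le> h" "0 \<le> y" "y \<le> h" "norm a' \<le> 1" "norm b' \<le> 1" for x y a' b'
  proof -
    have "dist (z + x *\<^sub>R a' + y *\<^sub>R b') z \<le> 2 * h" by (rule near_pt) (use that in auto)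
    then show "z + x *\<^sub>R a' + y *\<^sub>R b' \<in> S" "dist (z + x *\<^sub>R a' + y *\<^sub>R b') z < d1"
      "dist (z + x *\<^sub>R a' + y *\<^sub>R b') z < d2"
      using h r(2) by (auto simp: dist_commute subset_iff)
  qed
  obtain \<xi> \<eta> where 1: "0 < \<xi>" "\<xi> < h" "0 < \<eta>" "\<eta> < h"
     "f (z + h *\<^sub>R a + h *\<^sub>R b) - f (z + h *\<^sub>R a) - f (z + h *\<^sub>R b) + f z
       = h * h * P (z + \<xi> *\<^sub>R a + \<eta> *\<^sub>R b)"
    using mixed_mvt[of h a f z b] h(1) d inS(1) nab unfolding P_def by blast
  obtain \<xi>' \<eta>' where 2: "0 < \<xi>'" "\<xi>' < h" "0 < \<eta>'" "\<eta>' < h"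
     "f (z + h *\<^sub>R b + h *\<^sub>R a) - f (z + h *\<^sub>R b) - f (z + h *\<^sub>R a) + f z
       = h * h * Q (z + \<xi>' *\<^sub>R b + \<eta>' *\<^sub>R a)"
    using mixed_mvt[of h b f z a] h(1) d inS(1) nab unfolding Q_def by blast
  have "f (z + h *\<^sub>R b + h *\<^sub>R a) = f (z + h *\<^sub>R a + h *\<^sub>R b)" by (simp add: algebra_simps)
  then have "h * h * P (z + \<xi> *\<^sub>R a + \<eta> *\<^sub>R b) = h * h * Q (z + \<xi>' *\<^sub>R b + \<eta>' *\<^sub>R a)"
    using 1(5) 2(5) by linarith
  then have eq: "P (z + \<xi> *\<^sub>R a + \<eta> *\<^sub>R b) = Q (z + \<xi>' *\<^sub>R b + \<eta>' *\<^sub>R a)" using h(1) by simp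
  have "dist (P (z + \<xi> *\<^sub>R a + \<eta> *\<^sub>R b)) (P z) < e"
    using d1(2) inS[of \<xi> \<eta> a b] 1 nab by auto
  moreover have "dist (Q (z + \<xi>' *\<^sub>R b + \<eta>' *\<^sub>R a)) (Q z) < e"
    using d2(2) inS[of \<xi>' \<eta>' b a] 2 nab by auto
  ultimately have "\<bar>P z - Q z\<bar> < 2 * e" using eq unfolding dist_real_def by linarith
  then show False unfolding e_def by simp
qed


lemma ld_add_if[simp]: "ld v f z \<Longrightarrow> ld v g z \<Longrightarrow> ld v (\<lambda>w. f w + (if c then g w else 0)) z"
  by (cases c) simp_all
lemma pdir_add_if[simp]: "ld v f z \<Longrightarrow> ld v g z \<Longrightarrow>
   pdir v (\<lambda>w. f w + (if c then g w else 0)) z = pdir v f z + (if c then pdir v g z else 0)"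
  by (cases c) simp_all



lemma alg_identity:
  fixes u ut rj Sj Dj :: "'n::finite \<Rightarrow> real" and ux :: "'n \<Rightarrow> 'n \<Rightarrow> real"
  assumes r: "r > 0" and al: "\<alpha> > 0"
    and H1: "rt + (\<Sum>j\<in>UNIV. rj j * u j + r * ux j j) = 0"
    and H2: "\<And>i. ut i + (\<Sum>j\<in>UNIV. u j * ux i j) = - Sj i / r"
    and H3: "Dt + (\<Sum>j\<in>UNIV. u j * Dj j) = D\<^sup>2 - Sg / (\<alpha> * r)"
    and HD: "D = (\<Sum>j\<in>UNIV. ux j j)"
    and E: "E = (\<Sum>i\<in>UNIV. u i * u i) + \<alpha> * (D * D)"
  shows "1/2 * (rt * E + r * ((\<Sum>i\<in>UNIV. ut i * u i + u i * ut i) + \<alpha> * (Dt * D + D * Dt)))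
     + (\<Sum>j\<in>UNIV. ((1/2 * (rj j * E + r * ((\<Sum>i\<in>UNIV. ux i j * u i + u i * ux i j) + \<alpha> * (Dj j * D + D * Dj j))))
          + Sj j) * u j + (1/2 * r * E + Sg) * ux j j)
     = \<alpha> * r * D ^ 3"
proof -
  define A where "A = (\<Sum>j\<in>UNIV. rj j * u j)"
  define C where "C = (\<Sum>i\<in>UNIV. ut i * u i)"
  define Pq where "Pq = (\<Sum>j\<in>UNIV. \<Sum>i\<in>UNIV. u i * ux i j * u j)"
  define G where "G = (\<Sum>j\<in>UNIV. Dj j * u j)"
  define Hs where "Hs = (\<Sum>j\<in>UNIV. Sj j * u j)"
  have h1: "rt + A + r * D = 0" using H1 unfolding A_def HD by (simp add: sum.distrib sum_distrib_left)
  have "(\<Sum>i\<in>UNIV. u i * (ut i + (\<Sum>j\<in>UNIV. u j * ux i j))) = (\<Sum>i\<in>UNIV. u i * (- Sj i / r))"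
    using H2 by simp
  moreover have "(\<Sum>i\<in>UNIV. u i * (ut i + (\<Sum>j\<in>UNIV. u j * ux i j))) = C + Pq"
  proof -
    have "(\<Sum>i\<in>UNIV. u i * (ut i + (\<Sum>j\<in>UNIV. u j * ux i j)))
       = (\<Sum>i\<in>UNIV. ut i * u i) + (\<Sum>i\<in>UNIV. \<Sum>j\<in>UNIV. u i * ux i j * u j)"
      by (simp add: distrib_left sum.distrib sum_distrib_left mult.commute mult.left_commute)
    also have "(\<Sum>i\<in>UNIV. \<Sum>j\<in>UNIV. u i * ux i j * u j) = Pq"
      unfolding Pq_def by (rule sum.swap)
    finally show ?thesis unfolding C_def .
  qed
  moreover have "(\<Sum>i\<in>UNIV. u i * (- Sj i / r)) = - Hs / r"
    unfolding Hs_def by (simp add: sum_divide_distrib sum_negf mult.commute)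
  ultimately have h2: "C + Pq = - Hs / r" by simp
  have h3: "Dt + G = D\<^sup>2 - Sg / (\<alpha> * r)" using H3 unfolding G_def by (simp add: mult.commute)
  have inner: "(\<Sum>i\<in>UNIV. ux i j * u i + u i * ux i j) = 2 * (\<Sum>i\<in>UNIV. u i * ux i j)" for j
    by (simp add: sum.distrib[symmetric] sum_distrib_left mult.commute)
  have innert: "(\<Sum>i\<in>UNIV. ut i * u i + u i * ut i) = 2 * C"
    unfolding C_def by (simp add: sum.distrib[symmetric] sum_distrib_left mult.commute)
  have summ: "((1/2 * (rj j * E + r * ((\<Sum>i\<in>UNIV. ux i j * u i + u i * ux i j) + \<alpha> * (Dj j * D + D * Dj j))))
          + Sj j) * u j + (1/2 * r * E + Sg) * ux j j
      = 1/2 * E * (rj j * u j) + r * ((\<Sum>i\<in>UNIV. u i * ux i j) * u j) + \<alpha> * r * D * (Dj j * u j)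
        + Sj j * u j + (1/2 * r * E + Sg) * ux j j" for j
    unfolding inner by (simp add: algebra_simps)
  have pq: "(\<Sum>j\<in>UNIV. (\<Sum>i\<in>UNIV. u i * ux i j) * u j) = Pq"
    unfolding Pq_def by (simp add: sum_distrib_right)
  have sj: "(\<Sum>j\<in>UNIV. ((1/2 * (rj j * E + r * ((\<Sum>i\<in>UNIV. ux i j * u i + u i * ux i j) + \<alpha> * (Dj j * D + D * Dj j))))
          + Sj j) * u j + (1/2 * r * E + Sg) * ux j j)
     = (\<Sum>j\<in>UNIV. 1/2 * E * (rj j * u j) + r * ((\<Sum>i\<in>UNIV. u i * ux i j) * u j) + \<alpha> * r * D * (Dj j * u j)
        + Sj j * u j + (1/2 * r * E + Sg) * ux j j)"
    by (rule sum.cong[OF refl summ])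
  also have "\<dots> = 1/2 * E * A + r * Pq + \<alpha> * r * D * G + Hs + (1/2 * r * E + Sg) * D"
    unfolding sum.distrib sum_distrib_left[symmetric] pq A_def[symmetric] G_def[symmetric] Hs_def[symmetric] HD[symmetric]
    by (rule refl)
  finally have sj2: "(\<Sum>j\<in>UNIV. ((1/2 * (rj j * E + r * ((\<Sum>i\<in>UNIV. ux i j * u i + u i * ux i j) + \<alpha> * (Dj j * D + D * Dj j))))
          + Sj j) * u j + (1/2 * r * E + Sg) * ux j j) = 1/2 * E * A + r * Pq + \<alpha> * r * D * G + Hs + (1/2 * r * E + Sg) * D" .
  have "1/2 * (rt * E + r * ((\<Sum>i\<in>UNIV. ut i * u i + u i * ut i) + \<alpha> * (Dt * D + D * Dt)))
     + (\<Sum>j\<in>UNIV. ((1/2 * (rj j * E + r * ((\<Sum>i\<in>UNIV. ux i j * u i + u i * ux i j) + \<alpha> * (Dj j * D + D * Dj j))))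
          + Sj j) * u j + (1/2 * r * E + Sg) * ux j j)
     = 1/2 * (rt * E + r * (2 * C + \<alpha> * (Dt * D + D * Dt))) + (1/2 * E * A + r * Pq + \<alpha> * r * D * G + Hs + (1/2 * r * E + Sg) * D)"
    unfolding sj2 innert by (rule refl)
  also have "\<dots> = 1/2 * E * (rt + A + r * D) + r * (C + Pq) + \<alpha> * r * D * (Dt + G) + Hs + Sg * D"
    by (simp add: algebra_simps)
  also have "\<dots> = \<alpha> * r * D ^ 3"
  proof -
    have a: "r * (C + Pq) = - Hs" using h2 r by (simp add: field_simps)
    have b0: "\<alpha> * r * (Dt + G) = \<alpha> * r * D\<^sup>2 - Sg" using h3 r al by (simp add: field_simps)
    have b: "\<alpha> * r * D * (Dt + G) = \<alpha> * r * D ^ 3 - Sg * D"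
    proof -
      have "\<alpha> * r * D * (Dt + G) = D * (\<alpha> * r * (Dt + G))" by simp
      also have "\<dots> = D * (\<alpha> * r * D\<^sup>2 - Sg)" by (simp only: b0)
      also have "\<dots> = \<alpha> * r * D ^ 3 - Sg * D" by (simp add: algebra_simps power2_eq_square power3_eq_cube)
      finally show ?thesis .
    qed
    show ?thesis unfolding h1 a b by simp
  qed
  finally show ?thesis .
qed

lemma alg_mom:
  fixes u rj uij ujj Sj :: "'n::finite \<Rightarrow> real"
  assumes r: "r \<noteq> 0"
    and H1: "rt + (\<Sum>j\<in>UNIV. rj j * u j + r * ujj j) = 0"
    and H: "rt * ui + r * uti + (\<Sum>j\<in>UNIV. (rj j * ui + r * uij j) * u j + r * ui * ujj j + (if i = j then Sj j else 0)) = 0"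
  shows "uti + (\<Sum>j\<in>UNIV. u j * uij j) + Sj i / r = 0"
proof -
  have "(\<Sum>j\<in>UNIV. (rj j * ui + r * uij j) * u j + r * ui * ujj j + (if i = j then Sj j else 0))
     = ui * (\<Sum>j\<in>UNIV. rj j * u j + r * ujj j) + r * (\<Sum>j\<in>UNIV. u j * uij j) + Sj i"
    by (simp add: sum.distrib sum_distrib_left algebra_simps)
  with H have "rt * ui + r * uti + ui * (\<Sum>j\<in>UNIV. rj j * u j + r * ujj j) + r * (\<Sum>j\<in>UNIV. u j * uij j) + Sj i = 0"
    by simp
  moreover have "(\<Sum>j\<in>UNIV. rj j * u j + r * ujj j) = - rt" using H1 by simp
  ultimately have "r * (uti + (\<Sum>j\<in>UNIV. u j * uij j)) + Sj i = 0" by (simp add: algebra_simps)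
  then show ?thesis using r by (simp add: field_simps)
qed

lemma alg_div:
  fixes u Q :: "'n::finite \<Rightarrow> real" and A :: "'n \<Rightarrow> real" and C F :: "'n \<Rightarrow> 'n \<Rightarrow> real"
  assumes r: "r > 0" and al: "\<alpha> > 0"
    and S4: "\<And>i. A i + (\<Sum>j\<in>UNIV. F j i * F i j + u j * C j i) + Q i = 0"
    and igr: "Sg / r - \<alpha> * (\<Sum>i\<in>UNIV. Q i) = \<alpha> * ((\<Sum>j\<in>UNIV. F j j)\<^sup>2 + (\<Sum>i\<in>UNIV. \<Sum>j\<in>UNIV. F i j * F j i))"
    and Dt: "Dt = (\<Sum>i\<in>UNIV. A i)" and Dj: "\<And>j. Dj j = (\<Sum>i\<in>UNIV. C j i)" and D: "D = (\<Sum>j\<in>UNIV. F j j)"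
  shows "Dt + (\<Sum>j\<in>UNIV. u j * Dj j) = D\<^sup>2 - Sg / (\<alpha> * r)"
proof -
  define T where "T = (\<Sum>i\<in>UNIV. \<Sum>j\<in>UNIV. F i j * F j i)"
  have "(\<Sum>i\<in>UNIV. A i + (\<Sum>j\<in>UNIV. F j i * F i j + u j * C j i) + Q i) = 0"
    using S4 by simp
  moreover have "(\<Sum>i\<in>UNIV. A i + (\<Sum>j\<in>UNIV. F j i * F i j + u j * C j i) + Q i)
     = Dt + (\<Sum>i\<in>UNIV. \<Sum>j\<in>UNIV. F j i * F i j) + (\<Sum>i\<in>UNIV. \<Sum>j\<in>UNIV. u j * C j i) + (\<Sum>i\<in>UNIV. Q i)"
    unfolding Dt by (simp add: sum.distrib)
  moreover have "(\<Sum>i\<in>UNIV. \<Sum>j\<in>UNIV. F j i * F i j) = T"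
    unfolding T_def by (simp add: mult.commute)
  moreover have "(\<Sum>i\<in>UNIV. \<Sum>j\<in>UNIV. u j * C j i) = (\<Sum>j\<in>UNIV. u j * Dj j)"
    unfolding Dj sum_distrib_left by (rule sum.swap)
  ultimately have a: "Dt + T + (\<Sum>j\<in>UNIV. u j * Dj j) + (\<Sum>i\<in>UNIV. Q i) = 0" by simp
  have b: "(\<Sum>i\<in>UNIV. Q i) = Sg / (\<alpha> * r) - D\<^sup>2 - T"
    using igr al r unfolding T_def[symmetric] D[symmetric] by (simp add: field_simps)
  show ?thesis using a b by simp
qed



lemma sm_ld: "smooth_on S g \<Longrightarrow> set vs \<subseteq> Basis \<Longrightarrow> z \<in> S \<Longrightarrow> v \<in> Basis \<Longrightarrow> ld v (foldr pdir vs g) z"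
  unfolding smooth_on_def ld_def by blast
lemma sm_cont: "smooth_on S g \<Longrightarrow> set vs \<subseteq> Basis \<Longrightarrow> continuous_on S (foldr pdir vs g)"
  unfolding smooth_on_def by blast

lemma et_Basis[simp]: "((1::real), (0::real^'n)) \<in> Basis"
  by (simp add: Basis_prod_def)
lemma ex_Basis[simp]: "((0::real), (axis j 1::real^'n)) \<in> Basis"
  by (auto simp: Basis_prod_def Basis_vec_def)

lemma norm_sq_vec: "(norm (x::real^'n))\<^sup>2 = (\<Sum>i\<in>UNIV. x $ i * x $ i)"
  by (simp add: power2_norm_eq_inner inner_vec_def)

theorem mainTheorem9:
  fixes \<rho> Sig :: "real \<times> (real^'n) \<Rightarrow> real"
    and u :: "real \<times> (real^'n) \<Rightarrow> real^'n"
    and I :: "real set" and \<Omega> :: "(real^'n) set" and \<alpha> :: real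
  assumes "open I" and "open \<Omega>"
    and "\<alpha> > 0"
    and smooth_rho: "smooth_on (I \<times> \<Omega>) \<rho>"
    and smooth_u: "\<forall>j. smooth_on (I \<times> \<Omega>) (\<lambda>w. u w $ j)"
    and smooth_Sig: "smooth_on (I \<times> \<Omega>) Sig"
    and pos: "\<forall>z\<in>I \<times> \<Omega>. \<rho> z > 0"
    and mass: "\<forall>z\<in>I \<times> \<Omega>. dt \<rho> z + (\<Sum>j\<in>UNIV. dx j (\<lambda>w. \<rho> w * u w $ j) z) = 0"
    and momentum: "\<forall>z\<in>I \<times> \<Omega>. \<forall>i. dt (\<lambda>w. \<rho> w * u w $ i) z
        + (\<Sum>j\<in>UNIV. dx j (\<lambda>w. \<rho> w * u w $ i * u w $ j + (if i = j then Sig w else 0)) z) = 0"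
    and igr: "\<forall>z\<in>I \<times> \<Omega>. Sig z / \<rho> z - \<alpha> * (\<Sum>j\<in>UNIV. dx j (\<lambda>w. dx j Sig w / \<rho> w) z)
        = \<alpha> * ((\<Sum>j\<in>UNIV. dx j (\<lambda>w. u w $ j) z)\<^sup>2
                + (\<Sum>i\<in>UNIV. \<Sum>j\<in>UNIV. dx j (\<lambda>w. u w $ i) z * dx i (\<lambda>w. u w $ j) z))"
  shows "\<forall>z\<in>I \<times> \<Omega>.
     (let K = (\<lambda>w. 1/2 * \<rho> w * ((norm (u w))\<^sup>2 + \<alpha> * (divg u w)\<^sup>2)) in
        dt K z + (\<Sum>j\<in>UNIV. dx j (\<lambda>w. (K w + Sig w) * u w $ j) z)
          = \<alpha> * \<rho> z * (divg u z) ^ 3)"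
proof (intro ballI)
  fix z assume zI: "z \<in> I \<times> \<Omega>"
  define S where "S = I \<times> \<Omega>"
  define et :: "real \<times> (real^'n)" where "et = (1, 0)"
  define ex :: "'n \<Rightarrow> real \<times> (real^'n)" where "ex j = (0, axis j 1)" for j
  have oS: "open S" unfolding S_def using assms(1,2) by (rule open_Times)
  have bas[simp]: "et \<in> Basis" "ex j \<in> Basis" for j unfolding et_def ex_def by simp_all
  have smU: "smooth_on S (\<lambda>w. u w $ i)" for i using smooth_u unfolding S_def by blast
  have smr: "smooth_on S \<rho>" and smS: "smooth_on S Sig" using smooth_rho smooth_Sig unfolding S_def by auto
  have ld0[simp]: "ld v \<rho> w" "ld v (\<lambda>w. u w $ i) w" "ld v Sig w" if "w \<in> S" "v \<in> Basis" for v w i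
    using sm_ld[OF smr, of "[]"] sm_ld[OF smU, of "[]"] sm_ld[OF smS, of "[]"] that by auto
  have ld1[simp]: "ld v (pdir b \<rho>) w" "ld v (pdir b (\<lambda>w. u w $ i)) w" "ld v (pdir b Sig) w"
    if "w \<in> S" "v \<in> Basis" "b \<in> Basis" for v w i b
    using sm_ld[OF smr, of "[b]"] sm_ld[OF smU, of "[b]"] sm_ld[OF smS, of "[b]"] that by auto
  have rpos: "\<rho> w > 0" if "w \<in> S" for w using pos that unfolding S_def by auto
  have rne[simp]: "\<rho> w \<noteq> 0" if "w \<in> S" for w using rpos[OF that] by simp
  have mass1: "pdir et \<rho> w + (\<Sum>j\<in>UNIV. pdir (ex j) \<rho> w * u w $ j + \<rho> w * pdir (ex j) (\<lambda>w. u w $ j) w) = 0"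
    if "w \<in> S" for w
    using mass that unfolding S_def[symmetric] dt_def dx_def et_def[symmetric] ex_def[symmetric]
    by simp
  have mom1: "pdir et \<rho> w * u w $ i + \<rho> w * pdir et (\<lambda>w. u w $ i) w + (\<Sum>j\<in>UNIV.
      (pdir (ex j) \<rho> w * u w $ i + \<rho> w * pdir (ex j) (\<lambda>w. u w $ i) w) * u w $ j
      + \<rho> w * u w $ i * pdir (ex j) (\<lambda>w. u w $ j) w + (if i = j then pdir (ex j) Sig w else 0)) = 0"
    if "w \<in> S" for w i
    using momentum[rule_format, of w i] that unfolding S_def[symmetric] dt_def dx_def et_def[symmetric] ex_def[symmetric]
    by simp
  have mom2: "pdir et (\<lambda>w. u w $ i) w + (\<Sum>j\<in>UNIV. u w $ j * pdir (ex j) (\<lambda>w. u w $ i) w)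
      + pdir (ex i) Sig w / \<rho> w = 0" if "w \<in> S" for w i
    by (rule alg_mom[OF rne[OF that] mass1[OF that] mom1[OF that]])
  have zS: "z \<in> S" using zI unfolding S_def .
  define D where "D w = (\<Sum>j\<in>UNIV. pdir (ex j) (\<lambda>w. u w $ j) w)" for w
  have ldD[simp]: "ld v D w" if "w \<in> S" "v \<in> Basis" for v w
    unfolding D_def[abs_def] using that by simp
  have step4: "pdir (ex i) (pdir et (\<lambda>w. u w $ i)) z + (\<Sum>j\<in>UNIV. pdir (ex i) (\<lambda>w. u w $ j) z * pdir (ex j) (\<lambda>w. u w $ i) z
      + u z $ j * pdir (ex i) (pdir (ex j) (\<lambda>w. u w $ i)) z) + pdir (ex i) (\<lambda>w. pdir (ex i) Sig w / \<rho> w) z = 0" for i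
  proof -
    have "pdir (ex i) (\<lambda>w. pdir et (\<lambda>w. u w $ i) w + (\<Sum>j\<in>UNIV. u w $ j * pdir (ex j) (\<lambda>w. u w $ i) w)
      + pdir (ex i) Sig w / \<rho> w) z = pdir (ex i) (\<lambda>w. 0) z"
      by (rule pdir_cong[OF oS zS]) (simp add: mom2)
    then show ?thesis using zS by (simp del: pdir_divide)
  qed
  have cl: "pdir b (pdir a (\<lambda>w. u w $ i)) z = pdir a (pdir b (\<lambda>w. u w $ i)) z"
    if "a \<in> Basis" "b \<in> Basis" for a b i
  proof (rule clairaut[OF oS zS])
    show "norm a \<le> 1" "norm b \<le> 1" using that by simp_all
    show "ld a (\<lambda>w. u w $ i) w \<and> ld b (\<lambda>w. u w $ i) w \<and> ld b (pdir a (\<lambda>w. u w $ i)) w \<and> ld a (pdir b (\<lambda>w. u w $ i)) w"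
      if "w \<in> S" for w using that \<open>a \<in> Basis\<close> \<open>b \<in> Basis\<close> by simp
    show "continuous_on S (pdir b (pdir a (\<lambda>w. u w $ i)))"
      using sm_cont[OF smU, of "[b, a]"] that by simp
    show "continuous_on S (pdir a (pdir b (\<lambda>w. u w $ i)))"
      using sm_cont[OF smU, of "[a, b]"] that by simp
  qed
  have step5: "pdir et D z + (\<Sum>j\<in>UNIV. u z $ j * pdir (ex j) D z) = (D z)\<^sup>2 - Sig z / (\<alpha> * \<rho> z)"
  proof (rule alg_div[where F="\<lambda>j i. pdir (ex j) (\<lambda>w. u w $ i) z" and u="\<lambda>j. u z $ j"
      and A="\<lambda>i. pdir et (pdir (ex i) (\<lambda>w. u w $ i)) z" and C="\<lambda>j i. pdir (ex j) (pdir (ex i) (\<lambda>w. u w $ i)) z"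
      and Q="\<lambda>i. pdir (ex i) (\<lambda>w. pdir (ex i) Sig w / \<rho> w) z" and Sg="Sig z" and r="\<rho> z"])
    show "\<rho> z > 0" "\<alpha> > 0" using rpos[OF zS] assms(3) by auto
    show "pdir et (pdir (ex i) (\<lambda>w. u w $ i)) z + (\<Sum>j\<in>UNIV. pdir (ex j) (\<lambda>w. u w $ i) z * pdir (ex i) (\<lambda>w. u w $ j) z
      + u z $ j * pdir (ex j) (pdir (ex i) (\<lambda>w. u w $ i)) z) + pdir (ex i) (\<lambda>w. pdir (ex i) Sig w / \<rho> w) z = 0" for i
      using step4[of i] cl[of et "ex i" i] cl[of "ex _" "ex i" i] by (simp add: mult.commute)
    show "Sig z / \<rho> z - \<alpha> * (\<Sum>i\<in>UNIV. pdir (ex i) (\<lambda>w. pdir (ex i) Sig w / \<rho> w) z) =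
      \<alpha> * ((\<Sum>j\<in>UNIV. pdir (ex j) (\<lambda>w. u w $ j) z)\<^sup>2 + (\<Sum>i\<in>UNIV. \<Sum>j\<in>UNIV. pdir (ex i) (\<lambda>w. u w $ j) z * pdir (ex j) (\<lambda>w. u w $ i) z))"
      using igr[rule_format, OF zI] unfolding dx_def ex_def[symmetric] by (simp add: mult.commute)
    show "pdir et D z = (\<Sum>i\<in>UNIV. pdir et (pdir (ex i) (\<lambda>w. u w $ i)) z)"
      unfolding D_def[abs_def] using zS by simp
    show "pdir (ex j) D z = (\<Sum>i\<in>UNIV. pdir (ex j) (pdir (ex i) (\<lambda>w. u w $ i)) z)" for j
      unfolding D_def[abs_def] using zS by simp
    show "D z = (\<Sum>j\<in>UNIV. pdir (ex j) (\<lambda>w. u w $ j) z)" unfolding D_def ..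
  qed
  have divg: "divg u = D" by (rule ext) (simp add: divg_def dx_def D_def ex_def)
  have Keq: "(\<lambda>w. 1/2 * \<rho> w * ((norm (u w))\<^sup>2 + \<alpha> * (D w)\<^sup>2))
     = (\<lambda>w. 1/2 * \<rho> w * ((\<Sum>i\<in>UNIV. u w $ i * u w $ i) + \<alpha> * (D w * D w)))"
    unfolding norm_sq_vec by (simp add: power2_eq_square)
  define E where "E = (\<Sum>i\<in>UNIV. u z $ i * u z $ i) + \<alpha> * (D z * D z)"
  have e1: "pdir et (\<lambda>w. 1/2 * \<rho> w * ((\<Sum>i\<in>UNIV. u w $ i * u w $ i) + \<alpha> * (D w * D w))) z
     = 1/2 * (pdir et \<rho> z * E + \<rho> z * ((\<Sum>i\<in>UNIV. pdir et (\<lambda>w. u w $ i) z * u z $ i + u z $ i * pdir et (\<lambda>w. u w $ i) z)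
        + \<alpha> * (pdir et D z * D z + D z * pdir et D z)))"
    using zS by (simp add: E_def algebra_simps) (simp add: field_simps)
  have e2: "pdir (ex j) (\<lambda>w. (1/2 * \<rho> w * ((\<Sum>i\<in>UNIV. u w $ i * u w $ i) + \<alpha> * (D w * D w)) + Sig w) * u w $ j) z
     = (1/2 * (pdir (ex j) \<rho> z * E + \<rho> z * ((\<Sum>i\<in>UNIV. pdir (ex j) (\<lambda>w. u w $ i) z * u z $ i + u z $ i * pdir (ex j) (\<lambda>w. u w $ i) z)
        + \<alpha> * (pdir (ex j) D z * D z + D z * pdir (ex j) D z))) + pdir (ex j) Sig z) * u z $ j
       + (1/2 * \<rho> z * E + Sig z) * pdir (ex j) (\<lambda>w. u w $ j) z" for j
    using zS by (simp add: E_def algebra_simps) (simp add: field_simps)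
  have H2: "pdir et (\<lambda>w. u w $ i) z + (\<Sum>j\<in>UNIV. u z $ j * pdir (ex j) (\<lambda>w. u w $ i) z) = - pdir (ex i) Sig z / \<rho> z" for i
    using mom2[OF zS, of i] by simp
  have fin: "1/2 * (pdir et \<rho> z * E + \<rho> z * ((\<Sum>i\<in>UNIV. pdir et (\<lambda>w. u w $ i) z * u z $ i + u z $ i * pdir et (\<lambda>w. u w $ i) z)
        + \<alpha> * (pdir et D z * D z + D z * pdir et D z)))
     + (\<Sum>j\<in>UNIV. (1/2 * (pdir (ex j) \<rho> z * E + \<rho> z * ((\<Sum>i\<in>UNIV. pdir (ex j) (\<lambda>w. u w $ i) z * u z $ i + u z $ i * pdir (ex j) (\<lambda>w. u w $ i) z)
        + \<alpha> * (pdir (ex j) D z * D z + D z * pdir (ex j) D z))) + pdir (ex j) Sig z) * u z $ j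
       + (1/2 * \<rho> z * E + Sig z) * pdir (ex j) (\<lambda>w. u w $ j) z)
     = \<alpha> * \<rho> z * D z ^ 3"
    by (rule alg_identity[where rt="pdir et \<rho> z" and rj="\<lambda>j. pdir (ex j) \<rho> z" and u="\<lambda>i. u z $ i"
        and ut="\<lambda>i. pdir et (\<lambda>w. u w $ i) z" and ux="\<lambda>i j. pdir (ex j) (\<lambda>w. u w $ i) z"
        and Sj="\<lambda>j. pdir (ex j) Sig z" and Dj="\<lambda>j. pdir (ex j) D z" and Dt="pdir et D z" and D="D z"
        and Sg="Sig z" and r="\<rho> z" and E=E and \<alpha>=\<alpha>])
      (use rpos[OF zS] assms(3) mass1[OF zS] H2 step5 E_def in \<open>simp_all add: D_def\<close>)
  show "let K = (\<lambda>w. 1/2 * \<rho> w * ((norm (u w))\<^sup>2 + \<alpha> * (divg u w)\<^sup>2)) in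
        dt K z + (\<Sum>j\<in>UNIV. dx j (\<lambda>w. (K w + Sig w) * u w $ j) z)
          = \<alpha> * \<rho> z * (divg u z) ^ 3"
    unfolding Let_def divg dt_def dx_def et_def[symmetric] ex_def[symmetric] Keq e1 e2 fin ..
qed

end
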